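(* Let $I(z)$ be a nonzero homogeneous polynomial solution of degree $d$ of the KZ system over $\mathbb{F}_p$. Then $d\equiv\sum_{j=1}^nM_j\pmod p$.
   Context: Let $p,q$ be primes and $n$ a positive integer with $p>n\ge2$, $p>q$. Fix positive integers $m_1,\dots,m_n<q$; $M_i$ is the least positive integer with $M_i\equiv -m_iq^{-1}\pmod p$. For $i\ne j$ let $\Omega_{ij}$ be the $n\times n$ matrix with only nonzero entries $(\Omega_{ij})_{ii}=-m_j$, $(\Omega_{ij})_{ij}=m_j$, $(\Omega_{ij})_{ji}=m_i$, $(\Omega_{ij})_{jj}=-m_i$. A polynomial solution of the KZ system over $\mathbb{F}_p$ is $I=(I_1,\dots,I_n)\in\mathbb{F}_p[z_1,\dots,z_n]^n$ with $\partial I/\partial z_i=q^{-1}\sum_{j\ne i}\Omega_{ij}I/(z_i-z_j)$ for all $i$ and $\sum_im_iI_i=0$ (computed in $\mathbb{F}_p$). *)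

theory Defs
  imports "HOL-Library.Poly_Mapping" "HOL-Number_Theory.Number_Theory"
begin

type_synonym 'a mpol = "(nat \<Rightarrow>\<^sub>0 nat) \<Rightarrow>\<^sub>0 'a"

definition mconst :: "'a::zero \<Rightarrow> 'a mpol" where
  "mconst c = Poly_Mapping.single 0 c"

definition mvar :: "nat \<Rightarrow> 'a::{zero,one} mpol" where
  "mvar i = Poly_Mapping.single (Poly_Mapping.single i 1) 1"

definition tdeg :: "(nat \<Rightarrow>\<^sub>0 nat) \<Rightarrow> nat" where
  "tdeg \<alpha> = (\<Sum>k\<in>Poly_Mapping.keys \<alpha>. Poly_Mapping.lookup \<alpha> k)"

definition mderiv :: "nat \<Rightarrow> 'a::comm_ring_1 mpol \<Rightarrow> 'a mpol" where
  "mderiv i P = (\<Sum>\<alpha>\<in>Poly_Mapping.keys P.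
     Poly_Mapping.single (\<alpha> - Poly_Mapping.single i 1) (of_nat (Poly_Mapping.lookup \<alpha> i) * Poly_Mapping.lookup P \<alpha>))"

definition in_vars :: "nat \<Rightarrow> 'a::zero mpol \<Rightarrow> bool" where
  "in_vars n P \<longleftrightarrow> (\<forall>\<alpha>\<in>Poly_Mapping.keys P. Poly_Mapping.keys \<alpha> \<subseteq> {..<n})"

definition homogeneous :: "nat \<Rightarrow> 'a::zero mpol \<Rightarrow> bool" where
  "homogeneous d P \<longleftrightarrow> (\<forall>\<alpha>\<in>Poly_Mapping.keys P. tdeg \<alpha> = d)"

text \<open>The matrix Omega_{ij} (indices 0..n-1), entry (a,b).\<close>
definition Omega :: "(nat \<Rightarrow> nat) \<Rightarrow> nat \<Rightarrow> nat \<Rightarrow> nat \<Rightarrow> nat \<Rightarrow> int" where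
  "Omega m i j a b =
     (if a = i \<and> b = i then - int (m j)
      else if a = i \<and> b = j then int (m j)
      else if a = j \<and> b = i then int (m i)
      else if a = j \<and> b = j then - int (m i)
      else 0)"

definition Mcoef :: "'a::field itself \<Rightarrow> nat \<Rightarrow> nat \<Rightarrow> nat" where
  "Mcoef _ q mi = (LEAST M::nat. 0 < M \<and> (of_nat M :: 'a) = - of_nat mi * inverse (of_nat q))"

text \<open>KZ system with denominators cleared: multiplying the i-th equation by
  D_i = prod_{l \<noteq> i} (z_i - z_l) (a nonzero polynomial), component k.\<close>
definition KZ_solution ::
  "nat \<Rightarrow> nat \<Rightarrow> (nat \<Rightarrow> nat) \<Rightarrow> (nat \<Rightarrow> 'a::field mpol) \<Rightarrow> bool" where
  "KZ_solution n q m I \<longleftrightarrow>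
     (\<forall>k<n. in_vars n (I k)) \<and>
     (\<forall>i<n. \<forall>k<n.
        (\<Prod>l\<in>{..<n}-{i}. mvar i - mvar l) * mderiv i (I k) =
        mconst (inverse (of_nat q)) *
          (\<Sum>j\<in>{..<n}-{i}.
             (\<Sum>b<n. mconst (of_int (Omega m i j k b)) * I b) *
             (\<Prod>l\<in>{..<n}-{i,j}. mvar i - mvar l))) \<and>
     (\<Sum>k<n. mconst (of_nat (m k)) * I k) = 0"

end

theory Submission
  imports Defs
begin


lemma sum_offdiag_swap:
  fixes F :: "nat \<Rightarrow> nat \<Rightarrow> 'r::comm_monoid_add"
  shows "(\<Sum>i<n. \<Sum>j\<in>{..<n}-{i}. F i j) = (\<Sum>i<n. \<Sum>j\<in>{..<n}-{i}. F j i)"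
proof -
  have e: "\<And>G i. (\<Sum>j\<in>{..<n}-{i}. G j) = (\<Sum>j<n. if j = i then 0 else G j)"
    by (rule sum.mono_neutral_cong_left) auto
  have "(\<Sum>i<n. \<Sum>j<n. if j = i then 0 else F i j) = (\<Sum>j<n. \<Sum>i<n. if j = i then 0 else F i j)"
    by (rule sum.swap)
  also have "\<dots> = (\<Sum>i<n. \<Sum>j<n. if j = i then 0 else F j i)"
    by (intro sum.cong refl) auto
  finally show ?thesis unfolding e .
qed

lemma kz_core:
  fixes z Der :: "nat \<Rightarrow> 'r::idom" and A :: "nat \<Rightarrow> nat \<Rightarrow> 'r"
  assumes inj: "\<forall>i<n. \<forall>j<n. i \<noteq> j \<longrightarrow> z i \<noteq> z j"
    and sym: "\<forall>i<n. \<forall>j<n. A i j = A j i"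
    and H: "\<forall>i<n. (\<Prod>l\<in>{..<n}-{i}. z i - z l) * Der i =
               c * (\<Sum>j\<in>{..<n}-{i}. A i j * (\<Prod>l\<in>{..<n}-{i,j}. z i - z l))"
  shows "2 * (\<Sum>i<n. z i * Der i) = c * (\<Sum>i<n. \<Sum>j\<in>{..<n}-{i}. A i j)"
proof -
  define Dd where "Dd i = (\<Prod>l\<in>{..<n}-{i}. z i - z l)" for i
  define P where "P i j = (\<Prod>l\<in>{..<n}-{i,j}. z i - z l)" for i j
  define D where "D = (\<Prod>i<n. Dd i)"
  define T where "T i j = (\<Prod>i'\<in>{..<n}-{i}. Dd i') * P i j" for i j
  have f1: "Dd i = (z i - z j) * P i j" if "i<n" "j<n" "i\<noteq>j" for i j
  proof -
    have "{..<n}-{i}-{j} = {..<n}-{i,j}" by auto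
    then show ?thesis unfolding Dd_def P_def using that
      by (subst prod.remove[of _ j]) auto
  qed
  have f2: "D = Dd i * (\<Prod>i'\<in>{..<n}-{i}. Dd i')" if "i<n" for i
    unfolding D_def using that by (subst prod.remove[of _ i]) auto
  have f3: "(z i - z j) * T i j = D" if "i<n" "j<n" "i\<noteq>j" for i j
    unfolding T_def f2[OF that(1)] f1[OF that] by (simp add: ac_simps)
  have f4: "T j i = - T i j" if "i<n" "j<n" "i\<noteq>j" for i j
  proof -
    have "(z i - z j) * (T i j + T j i) = 0"
      using f3[OF that] f3[of j i] that by (simp add: algebra_simps)
    moreover have "z i - z j \<noteq> 0" using inj that by auto
    ultimately have "T i j + T j i = 0" by simp
    then show ?thesis by (simp add: eq_neg_iff_add_eq_0 add.commute)
  qed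
  have f5: "D * (z i * Der i) = c * (\<Sum>j\<in>{..<n}-{i}. A i j * z i * T i j)" if "i<n" for i
  proof -
    have "D * (z i * Der i) = (\<Prod>i'\<in>{..<n}-{i}. Dd i') * z i * (Dd i * Der i)"
      using f2[OF that] by (simp add: algebra_simps)
    also have "\<dots> = (\<Prod>i'\<in>{..<n}-{i}. Dd i') * z i * (c * (\<Sum>j\<in>{..<n}-{i}. A i j * P i j))"
      using H that unfolding Dd_def P_def by simp
    also have "\<dots> = c * (\<Sum>j\<in>{..<n}-{i}. A i j * z i * T i j)"
      unfolding T_def by (simp add: sum_distrib_left algebra_simps)
    finally show ?thesis .
  qed
  define S where "S = (\<Sum>i<n. \<Sum>j\<in>{..<n}-{i}. A i j * z i * T i j)"
  have g1: "D * (\<Sum>i<n. z i * Der i) = c * S"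
    unfolding S_def sum_distrib_left using f5 by (simp add: sum_distrib_left)
  have g2: "S = (\<Sum>i<n. \<Sum>j\<in>{..<n}-{i}. A j i * z j * T j i)"
    unfolding S_def by (rule sum_offdiag_swap)
  have "2 * S = S + S" by simp
  also have "\<dots> = (\<Sum>i<n. \<Sum>j\<in>{..<n}-{i}. A i j * z i * T i j + A j i * z j * T j i)"
    using g2 S_def by (simp add: sum.distrib)
  also have "\<dots> = (\<Sum>i<n. \<Sum>j\<in>{..<n}-{i}. A i j * D)"
  proof (rule sum.cong[OF refl], rule sum.cong[OF refl])
    fix i j assume "i \<in> {..<n}" "j \<in> {..<n}-{i}"
    then have ij: "i<n" "j<n" "i\<noteq>j" by auto
    have "A i j * z i * T i j + A j i * z j * T j i = A i j * ((z i - z j) * T i j)"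
      using f4[OF ij] sym ij by (simp add: algebra_simps)
    then show "A i j * z i * T i j + A j i * z j * T j i = A i j * D" using f3[OF ij] by simp
  qed
  also have "\<dots> = D * (\<Sum>i<n. \<Sum>j\<in>{..<n}-{i}. A i j)"
    by (simp add: sum_distrib_left sum_distrib_right mult.commute)
  finally have g3: "2 * S = D * (\<Sum>i<n. \<Sum>j\<in>{..<n}-{i}. A i j)" .
  have Dnz: "D \<noteq> 0"
    unfolding D_def Dd_def using inj by (auto simp: prod_zero_iff)
  have "D * (2 * (\<Sum>i<n. z i * Der i)) = D * (c * (\<Sum>i<n. \<Sum>j\<in>{..<n}-{i}. A i j))"
  proof -
    have "D * (2 * (\<Sum>i<n. z i * Der i)) = 2 * (D * (\<Sum>i<n. z i * Der i))" by (simp only: ac_simps)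
    also have "\<dots> = c * (2 * S)" unfolding g1 by (simp only: ac_simps)
    also have "\<dots> = D * (c * (\<Sum>i<n. \<Sum>j\<in>{..<n}-{i}. A i j))" unfolding g3 by (simp only: ac_simps)
    finally show ?thesis .
  qed
  then show ?thesis using Dnz by (rule mult_left_cancel[THEN iffD1, rotated])
qed



lemma lookup_mconst_mult: "Poly_Mapping.lookup (mconst c * P) \<beta> = c * Poly_Mapping.lookup P \<beta>"
  unfolding mconst_def mult_map_scale_conv_mult[symmetric] by (simp add: map.rep_eq when_def)

lemma mconst_add: "mconst (a + b) = mconst a + mconst b"
  unfolding mconst_def by (rule single_add)
lemma mconst_mult: "mconst ((a::'a::comm_ring_1) * b) = mconst a * mconst b"
  unfolding mconst_def by (simp add: mult_single)
lemma mconst_diff: "mconst ((a::'a::comm_ring_1) - b) = mconst a - mconst b"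
  unfolding mconst_def by (rule single_diff)
lemma mconst_uminus: "mconst (- (a::'a::comm_ring_1)) = - mconst a"
  unfolding mconst_def by (rule single_uminus)
lemma mconst_of_nat: "mconst (of_nat k :: 'a::comm_ring_1) = of_nat k"
  unfolding mconst_def by simp
lemma mconst_eq_0: "mconst c = 0 \<longleftrightarrow> c = 0"
  unfolding mconst_def by (metis lookup_single_eq single_zero)
lemma single_sum: "Poly_Mapping.single k (sum f A) = (\<Sum>x\<in>A. Poly_Mapping.single k (f x))"
  by (induct A rule: infinite_finite_induct) (auto simp: single_add)
lemma mconst_sum: "mconst (sum f A) = (\<Sum>x\<in>A. mconst (f x))"
  unfolding mconst_def by (rule single_sum)

lemma mvar_inj: "i \<noteq> j \<Longrightarrow> (mvar i :: 'a::{zero_neq_one} mpol) \<noteq> mvar j"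
  unfolding mvar_def by (metis lookup_single_eq lookup_single_not_eq zero_neq_one)

lemma mvar_mderiv:
  "mvar i * mderiv i P =
     (\<Sum>\<alpha>\<in>Poly_Mapping.keys P. Poly_Mapping.single \<alpha> (of_nat (Poly_Mapping.lookup \<alpha> i) * Poly_Mapping.lookup P \<alpha>))"
  unfolding mderiv_def sum_distrib_left
proof (rule sum.cong[OF refl])
  fix \<alpha> :: "nat \<Rightarrow>\<^sub>0 nat"
  show "mvar i * Poly_Mapping.single (\<alpha> - Poly_Mapping.single i 1) (of_nat (Poly_Mapping.lookup \<alpha> i) * Poly_Mapping.lookup P \<alpha>) =
        Poly_Mapping.single \<alpha> (of_nat (Poly_Mapping.lookup \<alpha> i) * Poly_Mapping.lookup P \<alpha>)"
  proof (cases "Poly_Mapping.lookup \<alpha> i = 0")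
    case True then show ?thesis by simp
  next
    case False
    have "Poly_Mapping.single i 1 + (\<alpha> - Poly_Mapping.single i 1) = \<alpha>"
      by (rule poly_mapping_eqI) (use False in \<open>auto simp: lookup_add lookup_minus lookup_single when_def\<close>)
    then show ?thesis unfolding mvar_def mult_single by simp
  qed
qed

lemma euler:
  fixes P :: "'a::comm_ring_1 mpol"
  assumes "in_vars n P" "homogeneous d P"
  shows "(\<Sum>i<n. mvar i * mderiv i P) = mconst (of_nat d) * P"
proof -
  have "(\<Sum>i<n. mvar i * mderiv i P) =
     (\<Sum>\<alpha>\<in>Poly_Mapping.keys P. \<Sum>i<n. Poly_Mapping.single \<alpha> (of_nat (Poly_Mapping.lookup \<alpha> i) * Poly_Mapping.lookup P \<alpha>))"
    unfolding mvar_mderiv by (rule sum.swap)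
  also have "\<dots> = (\<Sum>\<alpha>\<in>Poly_Mapping.keys P. Poly_Mapping.single \<alpha> (of_nat d * Poly_Mapping.lookup P \<alpha>))"
  proof (rule sum.cong[OF refl])
    fix \<alpha> assume a: "\<alpha> \<in> Poly_Mapping.keys P"
    have "(\<Sum>i<n. Poly_Mapping.lookup \<alpha> i) = tdeg \<alpha>"
      unfolding tdeg_def
      using assms(1) a unfolding in_vars_def
      by (intro sum.mono_neutral_right) (auto simp: in_keys_iff)
    also have "\<dots> = d" using assms(2) a unfolding homogeneous_def by auto
    finally have "(\<Sum>i<n. Poly_Mapping.lookup \<alpha> i) = d" .
    then show "(\<Sum>i<n. Poly_Mapping.single \<alpha> (of_nat (Poly_Mapping.lookup \<alpha> i) * Poly_Mapping.lookup P \<alpha>)) =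
          Poly_Mapping.single \<alpha> (of_nat d * Poly_Mapping.lookup P \<alpha>)"
      unfolding single_sum[symmetric] sum_distrib_right[symmetric] of_nat_sum[symmetric] by simp
  qed
  also have "\<dots> = mconst (of_nat d) * P"
  proof (rule poly_mapping_eqI)
    fix \<beta>
    show "Poly_Mapping.lookup (\<Sum>\<alpha>\<in>Poly_Mapping.keys P. Poly_Mapping.single \<alpha> (of_nat d * Poly_Mapping.lookup P \<alpha>)) \<beta> =
          Poly_Mapping.lookup (mconst (of_nat d) * P) \<beta>"
      unfolding lookup_mconst_mult lookup_sum lookup_single
      by (cases "\<beta> \<in> Poly_Mapping.keys P") (auto simp: when_def in_keys_iff)
  qed
  finally show ?thesis .
qed



lemma omega_split: "i \<noteq> j \<Longrightarrow> Omega m i j k b =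
  (if k = i then (if b = i then - int (m j) else if b = j then int (m j) else 0) else 0) +
  (if k = j then (if b = i then int (m i) else if b = j then - int (m i) else 0) else 0)"
  unfolding Omega_def by (cases "k = i"; cases "k = j"; cases "b = i"; cases "b = j"; simp)

lemma omega_sym: "Omega m i j a b = Omega m j i a b"
  unfolding Omega_def by (cases "a = i"; cases "a = j"; cases "b = i"; cases "b = j"; simp)

lemma omega_colsum:
  assumes "k<n" "b<n"
  shows "(\<Sum>i<n. \<Sum>j\<in>{..<n}-{i}. Omega m i j k b) =
         2 * int (m b) - (if b = k then 2 * (\<Sum>j<n. int (m j)) else 0)"
proof -
  define X where "X i j = (if k = i then (if b = i then - int (m j) else if b = j then int (m j) else 0) else (0::int))" for i j
  have 1: "(\<Sum>i<n. \<Sum>j\<in>{..<n}-{i}. Omega m i j k b) =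
      (\<Sum>i<n. \<Sum>j\<in>{..<n}-{i}. X i j) + (\<Sum>i<n. \<Sum>j\<in>{..<n}-{i}. X j i)"
    unfolding sum.distrib[symmetric]
  proof (intro sum.cong refl)
    fix i j assume "i \<in> {..<n}" "j \<in> {..<n}-{i}"
    then have ij: "i \<noteq> j" by auto
    show "Omega m i j k b = X i j + X j i"
      unfolding omega_split[OF ij] X_def using ij
      by (cases "k = i"; cases "k = j"; cases "b = i"; cases "b = j"; simp)
  qed
  have 2: "(\<Sum>i<n. \<Sum>j\<in>{..<n}-{i}. X j i) = (\<Sum>i<n. \<Sum>j\<in>{..<n}-{i}. X i j)"
    by (rule sum_offdiag_swap[symmetric])
  have 3: "(\<Sum>i<n. \<Sum>j\<in>{..<n}-{i}. X i j) = (\<Sum>i<n. if i = k then (\<Sum>j\<in>{..<n}-{k}. X k j) else 0)"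
    by (intro sum.cong refl) (auto simp: X_def)
  have 4: "(\<Sum>j\<in>{..<n}-{k}. X k j) = int (m b) - (if b = k then (\<Sum>j<n. int (m j)) else 0)"
  proof (cases "b = k")
    case True
    have "(\<Sum>j\<in>{..<n}-{k}. X k j) = - (\<Sum>j\<in>{..<n}-{k}. int (m j))"
      unfolding sum_negf[symmetric] by (intro sum.cong refl) (auto simp: X_def True)
    also have "(\<Sum>j<n. int (m j)) = int (m k) + (\<Sum>j\<in>{..<n}-{k}. int (m j))"
      using assms by (subst sum.remove[of _ k]) auto
    ultimately show ?thesis using True by simp
  next
    case False
    have "(\<Sum>j\<in>{..<n}-{k}. X k j) = (\<Sum>j\<in>{..<n}-{k}. if b = j then int (m j) else 0)"
      by (intro sum.cong refl) (auto simp: X_def False)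
    also have "\<dots> = int (m b)" using assms False by (simp add: sum.delta)
    finally show ?thesis using False by simp
  qed
  show ?thesis unfolding 1 2 3 using assms 4 by simp
qed

lemma A_total:
  fixes I :: "nat \<Rightarrow> 'a::comm_ring_1 mpol"
  assumes "k<n" "(\<Sum>k<n. mconst (of_nat (m k)) * I k) = 0"
  shows "(\<Sum>i<n. \<Sum>j\<in>{..<n}-{i}. \<Sum>b<n. mconst (of_int (Omega m i j k b)) * I b) =
         mconst (- (2 * (\<Sum>j<n. of_nat (m j)))) * I k"
proof -
  have "(\<Sum>i<n. \<Sum>j\<in>{..<n}-{i}. \<Sum>b<n. mconst (of_int (Omega m i j k b)) * I b) =
        (\<Sum>i<n. \<Sum>b<n. \<Sum>j\<in>{..<n}-{i}. mconst (of_int (Omega m i j k b)) * I b)"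
    by (rule sum.cong[OF refl], rule sum.swap)
  also have "\<dots> = (\<Sum>b<n. \<Sum>i<n. \<Sum>j\<in>{..<n}-{i}. mconst (of_int (Omega m i j k b)) * I b)"
    by (rule sum.swap)
  also have "\<dots> = (\<Sum>b<n. mconst (of_int (\<Sum>i<n. \<Sum>j\<in>{..<n}-{i}. Omega m i j k b)) * I b)"
    by (simp only: of_int_sum mconst_sum sum_distrib_right)
  also have "\<dots> = (\<Sum>b<n. 2 * (mconst (of_nat (m b)) * I b) -
                 (if b = k then mconst (2 * (\<Sum>j<n. of_nat (m j))) * I k else 0))"
  proof (intro sum.cong refl)
    fix b assume "b \<in> {..<n}"
    then have "b < n" by simp
    have e: "(of_int (2 * int (m b) - (if b = k then 2 * (\<Sum>j<n. int (m j)) else 0)) :: 'a) =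
          2 * of_nat (m b) - (if b = k then 2 * (\<Sum>j<n. of_nat (m j)) else 0)"
      by simp
    have two: "mconst (2::'a) = 2" unfolding mconst_def by simp
    show "mconst (of_int (\<Sum>i<n. \<Sum>j\<in>{..<n}-{i}. Omega m i j k b)) * I b =
          2 * (mconst (of_nat (m b)) * I b) -
          (if b = k then mconst (2 * (\<Sum>j<n. of_nat (m j))) * I k else 0)"
      unfolding omega_colsum[OF assms(1) \<open>b<n\<close>] e
      by (cases "b = k") (simp_all only: simp_thms if_True if_False diff_zero mconst_diff mconst_mult two ring_distribs mult.assoc)
  qed
  also have "\<dots> = 2 * (\<Sum>b<n. mconst (of_nat (m b)) * I b) - mconst (2 * (\<Sum>j<n. of_nat (m j))) * I k"
    unfolding sum_subtractf sum_distrib_left[symmetric] using assms(1) by (simp only: sum.delta finite_lessThan lessThan_iff if_True)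
  also have "\<dots> = mconst (- (2 * (\<Sum>j<n. of_nat (m j)))) * I k"
    by (simp only: assms(2) mconst_uminus mult_zero_right diff_0 mult_minus_left)
  finally show ?thesis .
qed


lemma char_surj:
  assumes "card (UNIV :: 'a::{finite,ring_1} set) = CHAR('a)"
  shows "\<exists>k. (of_nat k :: 'a) = x"
proof -
  have inj: "inj_on (of_nat :: nat \<Rightarrow> 'a) {..<CHAR('a)}"
    by (rule inj_onI) (auto simp: of_nat_eq_iff_cong_CHAR intro: cong_less_modulus_unique_nat)
  have "(of_nat ` {..<CHAR('a)} :: 'a set) = UNIV"
    by (rule card_subset_eq) (use inj assms in \<open>auto simp: card_image\<close>)
  then show ?thesis by (metis UNIV_I imageE)
qed

lemma Mcoef_val:
  fixes q mi :: nat
  assumes surj: "\<And>x::'a::field. \<exists>k. (of_nat k :: 'a) = x"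
    and c: "(of_nat c :: 'a) = 0" "c > 0"
  shows "(of_nat (Mcoef TYPE('a) q mi) :: 'a) = - of_nat mi * inverse (of_nat q)"
proof -
  obtain k where k: "(of_nat k :: 'a) = - of_nat mi * inverse (of_nat q)" using surj by blast
  have "0 < k + c \<and> (of_nat (k + c) :: 'a) = - of_nat mi * inverse (of_nat q)"
    using k c by simp
  then show ?thesis unfolding Mcoef_def by (rule LeastI_ex[THEN conjunct2, OF exI])
qed

theorem corollary5p5:
  fixes p q n d :: nat and m :: "nat \<Rightarrow> nat" and I :: "nat \<Rightarrow> 'a::{finite,field} mpol"
  assumes "prime p" and "prime q" and "card (UNIV :: 'a set) = p"
    and "n \<ge> 2" and "p > n" and "p > q"
    and "\<forall>i<n. 0 < m i \<and> m i < q"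
    and "KZ_solution n q m I"
    and "\<forall>k<n. homogeneous d (I k)"
    and "\<exists>k<n. I k \<noteq> 0"
  shows "[d = (\<Sum>j<n. Mcoef TYPE('a) q (m j))] (mod p)"
proof -
  from assms(10) obtain k0 where k0: "k0 < n" "I k0 \<noteq> 0" by blast
  note KZ = assms(8)[unfolded KZ_solution_def]
  have "CHAR('a) dvd p" using CHAR_dvd_CARD[where 'a='a] assms(3) by simp
  moreover have "prime CHAR('a)"
    by (rule prime_CHAR_semidom, rule finite_imp_CHAR_pos) simp
  ultimately have char: "CHAR('a) = p" using assms(1) by (simp add: primes_dvd_imp_eq)
  have q0: "(of_nat q :: 'a) \<noteq> 0"
    using assms(2,6) by (auto simp: of_nat_eq_0_iff_char_dvd char dest: nat_dvd_not_less[rotated] prime_gt_0_nat)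
  have two0: "(2 :: 'a) \<noteq> 0"
  proof
    assume "(2::'a) = 0"
    then have "(of_nat 2 :: 'a) = 0" by simp
    then have "p dvd 2" by (simp only: of_nat_eq_0_iff_char_dvd char)
    then show False using assms(4,5) by (auto dest: dvd_imp_le)
  qed
  have E: "(\<Sum>i<n. mvar i * mderiv i (I k0)) = mconst (of_nat d) * I k0"
    by (rule euler) (use KZ assms(9) k0 in auto)
  have core: "2 * (\<Sum>i<n. mvar i * mderiv i (I k0)) =
     mconst (inverse (of_nat q)) * (\<Sum>i<n. \<Sum>j\<in>{..<n}-{i}. \<Sum>b<n. mconst (of_int (Omega m i j k0 b)) * I b)"
  proof (rule kz_core)
    show "\<forall>i<n. \<forall>j<n. i \<noteq> j \<longrightarrow> (mvar i :: 'a mpol) \<noteq> mvar j" using mvar_inj by blast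
    show "\<forall>i<n. \<forall>j<n. (\<Sum>b<n. mconst (of_int (Omega m i j k0 b)) * I b) = (\<Sum>b<n. mconst (of_int (Omega m j i k0 b)) * I b)"
    proof (intro allI impI)
      fix i j
      show "(\<Sum>b<n. mconst (of_int (Omega m i j k0 b)) * I b) = (\<Sum>b<n. mconst (of_int (Omega m j i k0 b)) * I b)"
        by (simp only: omega_sym[of m i j k0])
    qed
    show "\<forall>i<n. (\<Prod>l\<in>{..<n}-{i}. mvar i - mvar l) * mderiv i (I k0) =
         mconst (inverse (of_nat q)) * (\<Sum>j\<in>{..<n}-{i}. (\<Sum>b<n. mconst (of_int (Omega m i j k0 b)) * I b) * (\<Prod>l\<in>{..<n}-{i,j}. mvar i - mvar l))"
      using KZ k0 by blast
  qed
  define S where "S = (\<Sum>j<n. (of_nat (m j) :: 'a))"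
  have T: "(\<Sum>i<n. \<Sum>j\<in>{..<n}-{i}. \<Sum>b<n. mconst (of_int (Omega m i j k0 b)) * I b) = mconst (- (2 * S)) * I k0"
    unfolding S_def by (rule A_total[OF k0(1)]) (use KZ in blast)
  have two: "mconst (2::'a) = 2" unfolding mconst_def by simp
  have "mconst (2 * of_nat d + inverse (of_nat q) * (2 * S)) * I k0 =
        2 * (mconst (of_nat d) * I k0) - mconst (inverse (of_nat q)) * (mconst (- (2 * S)) * I k0)"
    by (simp only: mconst_add mconst_mult mconst_uminus two) (simp add: algebra_simps)
  also have "\<dots> = 0"
  proof -
    have c2: "2 * (mconst (of_nat d) * I k0) = mconst (inverse (of_nat q)) * (mconst (- (2 * S)) * I k0)"
      using core unfolding E T .
    show ?thesis by (simp only: c2 diff_self)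
  qed
  finally have "2 * of_nat d + inverse (of_nat q) * (2 * S) = (0::'a)"
    using k0(2) by (simp add: mconst_eq_0)
  then have "2 * (of_nat d + inverse (of_nat q) * S) = (0::'a)" by (simp add: algebra_simps)
  then have "of_nat d + inverse (of_nat q) * S = (0::'a)" using two0 by (metis mult_eq_0_iff)
  then have dval: "(of_nat d :: 'a) = (\<Sum>j<n. - of_nat (m j) * inverse (of_nat q))"
  proof -
    have h1: "(\<Sum>j<n. - of_nat (m j) * inverse (of_nat q)) = - (inverse (of_nat q) * S)"
      unfolding S_def by (simp add: sum_distrib_left sum_negf mult.commute)
    have dneg: "(of_nat d :: 'a) = - (inverse (of_nat q) * S)"
      using \<open>of_nat d + inverse (of_nat q) * S = 0\<close> by (simp only: eq_neg_iff_add_eq_0)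
    from dneg h1 show ?thesis by (rule trans[OF _ sym])
  qed
  have surj: "\<And>x::'a. \<exists>k. (of_nat k :: 'a) = x" using char_surj[where 'a='a] assms(3) char by simp
  have cpos: "(of_nat p :: 'a) = 0" "p > 0" using char assms(1) by (auto simp: prime_gt_0_nat)
  have "(of_nat d :: 'a) = (\<Sum>j<n. of_nat (Mcoef TYPE('a) q (m j)))"
    unfolding dval by (simp add: Mcoef_val[OF surj cpos])
  also have "\<dots> = of_nat (\<Sum>j<n. Mcoef TYPE('a) q (m j))" by simp
  finally show ?thesis by (simp only: of_nat_eq_iff_cong_CHAR char)
qed


end
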